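(* Let $G$ be a split graph with vertex partition $\{X,Y\}$, where $X=\{v_1,\ldots,v_n\}$ is a maximal clique of $G$ and $Y=V(G)\setminus X$ is a stable set, and write $d_i=|N_G(v_i)\cap Y|$, with $d_1\ge\cdots\ge d_n$ and $n\ge 4$. If $d_1<\lfloor n/2\rfloor$ and $d_2=0$, then $\chi'_{\rm irr}(G)=3$.
   Context: All graphs are finite and simple. A graph is locally irregular if any two adjacent vertices have distinct degrees. A locally irregular decomposition of $G$ is a collection of locally irregular subgraphs whose edge sets partition $E(G)$; for a graph admitting one, $\chi'_{\rm irr}(G)$ is the minimum number of subgraphs in such a decomposition. *)

theory Defs
  imports Main
begin

definition simple_graph :: "'a set \<Rightarrow> 'a set set \<Rightarrow> bool" where
  "simple_graph V E \<longleftrightarrow> finite V \<and>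
     (\<forall>e\<in>E. \<exists>u w. u \<noteq> w \<and> u \<in> V \<and> w \<in> V \<and> e = {u, w})"

definition edeg :: "'a set set \<Rightarrow> 'a \<Rightarrow> nat" where
  "edeg F x = card {e\<in>F. x \<in> e}"

definition locally_irregular :: "'a set set \<Rightarrow> bool" where
  "locally_irregular F \<longleftrightarrow> (\<forall>u w. {u, w} \<in> F \<longrightarrow> u \<noteq> w \<longrightarrow> edeg F u \<noteq> edeg F w)"

definition irr_decomp_k :: "'a set set \<Rightarrow> nat \<Rightarrow> bool" where
  "irr_decomp_k E k \<longleftrightarrow> (\<exists>c :: 'a set \<Rightarrow> nat.
      (\<forall>e\<in>E. c e < k) \<and> (\<forall>i<k. locally_irregular {e\<in>E. c e = i}))"

definition irr_decomposable :: "'a set set \<Rightarrow> bool" where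
  "irr_decomposable E \<longleftrightarrow> (\<exists>k. irr_decomp_k E k)"

definition chi_irr :: "'a set set \<Rightarrow> nat" where
  "chi_irr E = (LEAST k. irr_decomp_k E k)"

end

theory Submission
  imports Defs
begin

definition isC :: "nat \<Rightarrow> nat \<Rightarrow> nat \<Rightarrow> bool" where
  "isC p i j = ({i,j} = {p-1,p} \<or> {i,j} = {p,p+1})"

definition colidx :: "nat \<Rightarrow> nat \<Rightarrow> nat \<Rightarrow> nat \<Rightarrow> nat" where
  "colidx n p i j = (if isC p i j then 2 else if n+1 \<le> i+j then 0 else 1)"

lemma isC_eq: "isC p i j = ((i = p-1 \<and> j = p) \<or> (i = p \<and> j = p - 1) \<or> (i = p \<and> j = p+1) \<or> (i = p+1 \<and> j = p))"
  unfolding isC_def doubleton_eq_iff by auto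

lemma card_rb:
  assumes "i \<in> {1..n}"
  shows "card {j\<in>{1..n}. j\<noteq>i \<and> n+1 \<le> i+j} = i - (if n+1 \<le> 2*i then 1 else 0)"
proof -
  have "{j\<in>{1..n}. j\<noteq>i \<and> n+1 \<le> i+j} = {n+1-i..n} - {i}" using assms by auto
  moreover have "card {n+1-i..n} = i" using assms by auto
  moreover have "(i \<in> {n+1-i..n}) = (n+1 \<le> 2*i)" using assms by auto
  ultimately show ?thesis by (simp add: card_Diff_singleton_if)
qed

lemma card_bb:
  assumes "i \<in> {1..n}"
  shows "card {j\<in>{1..n}. j\<noteq>i \<and> \<not> n+1 \<le> i+j} = n - i - (if 2*i \<le> n then 1 else 0)"
proof -
  have "{j\<in>{1..n}. j\<noteq>i \<and> \<not> n+1 \<le> i+j} = {1..n-i} - {i}" using assms by auto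
  moreover have "card {1..n-i} = n - i" using assms by auto
  moreover have "(i \<in> {1..n-i}) = (2*i \<le> n)" using assms by auto
  ultimately show ?thesis by (simp add: card_Diff_singleton_if)
qed

definition Cn :: "nat \<Rightarrow> nat \<Rightarrow> nat \<Rightarrow> nat set" where
  "Cn n p i = {j\<in>{1..n}. j\<noteq>i \<and> isC p i j}"

lemma Cn_eq:
  assumes "2 \<le> p" "p + 1 \<le> n"
  shows "Cn n p i = (if i = p - 1 \<or> i = p + 1 then {p} else if i = p then {p-1,p+1} else {})"
  using assms unfolding Cn_def isC_eq by auto

lemma card_Cn:
  assumes "2 \<le> p" "p + 1 \<le> n"
  shows "card (Cn n p i) = (if i = p - 1 \<or> i = p + 1 then 1 else if i = p then 2 else 0)"
  using assms by (simp add: Cn_eq)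

lemma set_k:
  "{j\<in>{1..n}. j\<noteq>i \<and> colidx n p i j = 2} = Cn n p i"
  "{j\<in>{1..n}. j\<noteq>i \<and> colidx n p i j = 0} = {j\<in>{1..n}. j\<noteq>i \<and> n+1 \<le> i+j} - Cn n p i"
  "{j\<in>{1..n}. j\<noteq>i \<and> colidx n p i j = 1} = {j\<in>{1..n}. j\<noteq>i \<and> \<not> n+1 \<le> i+j} - Cn n p i"
  unfolding colidx_def Cn_def by auto
lemma deg_even:
  assumes "n = 2*m" "2 \<le> m" "p = m+1" "i \<in> {1..n}"
  shows "card {j\<in>{1..n}. j\<noteq>i \<and> colidx n p i j = 0} =
           i - (if m+1 \<le> i then 1 else 0) - (if i = m \<or> i = m + 2 then 1 else if i = m+1 then 2 else 0)"
    "card {j\<in>{1..n}. j\<noteq>i \<and> colidx n p i j = 1} = n - i - (if i \<le> m then 1 else 0)"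
    "card {j\<in>{1..n}. j\<noteq>i \<and> colidx n p i j = 2} = (if i = m \<or> i = m + 2 then 1 else if i = m+1 then 2 else 0)"
proof -
  have p2: "2 \<le> p" "p+1 \<le> n" using assms by auto
  have sub: "Cn n p i \<subseteq> {j\<in>{1..n}. j\<noteq>i \<and> n+1 \<le> i+j}"
    using assms unfolding Cn_def isC_eq by auto
  have fin: "finite (Cn n p i)" unfolding Cn_def by auto
  show "card {j\<in>{1..n}. j\<noteq>i \<and> colidx n p i j = 0} =
           i - (if m+1 \<le> i then 1 else 0) - (if i = m \<or> i = m + 2 then 1 else if i = m+1 then 2 else 0)"
    unfolding set_k using sub fin card_rb[OF assms(4)] assms card_Cn[OF p2, of i] assms
    by (simp add: card_Diff_subset)
  have "{j\<in>{1..n}. j\<noteq>i \<and> \<not> n+1 \<le> i+j} - Cn n p i = {j\<in>{1..n}. j\<noteq>i \<and> \<not> n+1 \<le> i+j}"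
    using sub by auto
  then show "card {j\<in>{1..n}. j\<noteq>i \<and> colidx n p i j = 1} = n - i - (if i \<le> m then 1 else 0)"
    unfolding set_k using card_bb[OF assms(4)] assms by simp
  show "card {j\<in>{1..n}. j\<noteq>i \<and> colidx n p i j = 2} = (if i = m \<or> i = m + 2 then 1 else if i = m+1 then 2 else 0)"
    unfolding set_k using card_Cn[OF p2] assms by simp
qed

lemma deg_odd:
  assumes "n = 2*m+1" "2 \<le> m" "p = m" "i \<in> {1..n}"
  shows "card {j\<in>{1..n}. j\<noteq>i \<and> colidx n p i j = 0} = i - (if m+1 \<le> i then 1 else 0)"
    "card {j\<in>{1..n}. j\<noteq>i \<and> colidx n p i j = 1} = n - i - (if i \<le> m then 1 else 0)
        - (if i + 1 = m \<or> i = m + 1 then 1 else if i = m then 2 else 0)"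
    "card {j\<in>{1..n}. j\<noteq>i \<and> colidx n p i j = 2} = (if i + 1 = m \<or> i = m + 1 then 1 else if i = m then 2 else 0)"
proof -
  have p2: "2 \<le> p" "p+1 \<le> n" using assms by auto
  have sub: "Cn n p i \<subseteq> {j\<in>{1..n}. j\<noteq>i \<and> \<not> n+1 \<le> i+j}"
    using assms unfolding Cn_def isC_eq by auto
  have fin: "finite (Cn n p i)" unfolding Cn_def by auto
  show "card {j\<in>{1..n}. j\<noteq>i \<and> colidx n p i j = 1} = n - i - (if i \<le> m then 1 else 0)
        - (if i + 1 = m \<or> i = m + 1 then 1 else if i = m then 2 else 0)"
  proof -
    have h: "(i = p - 1) = (i + 1 = m)" "(2*i \<le> n) = (i \<le> m)" using assms by auto
    have e1: "card (Cn n p i) = (if i + 1 = m \<or> i = m + 1 then 1 else if i = m then 2 else 0)"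
      using card_Cn[OF p2, of i] h assms(3) by simp
    have e2: "card {j\<in>{1..n}. j\<noteq>i \<and> \<not> n+1 \<le> i+j} = n - i - (if i \<le> m then 1 else 0)"
      using card_bb[OF assms(4)] h by simp
    show ?thesis unfolding set_k card_Diff_subset[OF fin sub] e1 e2 by simp
  qed
  have "{j\<in>{1..n}. j\<noteq>i \<and> n+1 \<le> i+j} - Cn n p i = {j\<in>{1..n}. j\<noteq>i \<and> n+1 \<le> i+j}"
    using sub by auto
  then show "card {j\<in>{1..n}. j\<noteq>i \<and> colidx n p i j = 0} = i - (if m+1 \<le> i then 1 else 0)"
    unfolding set_k using card_rb[OF assms(4)] assms by (simp; presburger)
  show "card {j\<in>{1..n}. j\<noteq>i \<and> colidx n p i j = 2} = (if i + 1 = m \<or> i = m + 1 then 1 else if i = m then 2 else 0)"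
    unfolding set_k using card_Cn[OF p2, of i] assms by (simp; arith)
qed

definition Dg :: "nat \<Rightarrow> nat \<Rightarrow> nat \<Rightarrow> nat \<Rightarrow> nat \<Rightarrow> nat" where
  "Dg n p d1 k i = card {j\<in>{1..n}. j\<noteq>i \<and> colidx n p i j = k} + (if i = 1 \<and> k = 1 then d1 else 0)"


lemma pos5: "i < m \<or> i = m \<or> i = m+1 \<or> i = m+2 \<or> m+3 \<le> (i::nat)" by auto
lemma pos5': "i + 1 < m \<or> i + 1 = m \<or> i = m \<or> i = m+1 \<or> m+2 \<le> (i::nat)" by auto

lemma v_even0:
  fixes x m D :: nat
  assumes "2 \<le> m" "1 \<le> x" "x \<le> 2*m"
   "D = x - (if m+1 \<le> x then 1 else 0) - (if x = m \<or> x = m + 2 then 1 else if x = m+1 then 2 else 0)"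
  shows "(x < m \<and> D = x) \<or> (x = m \<and> D + 1 = m) \<or> (x = m+1 \<and> D + 2 = m) \<or> (x = m+2 \<and> D = m) \<or> (m+3 \<le> x \<and> D + 1 = x)"
  using pos5[of x m] assms by (elim disjE; simp)

lemma v_even1:
  fixes x m D n d1 :: nat
  assumes "2 \<le> m" "1 \<le> x" "x \<le> 2*m" "n = 2*m"
   "D = n - x - (if x \<le> m then 1 else 0) + (if x = 1 then d1 else 0)"
  shows "(x = 1 \<and> D + 2 = 2*m + d1) \<or> (2 \<le> x \<and> x \<le> m \<and> D + x + 1 = 2*m) \<or> (m+1 \<le> x \<and> D + x = 2*m)"
  using assms by (cases "x = 1"; cases "x \<le> m"; simp)

lemma v_odd0:
  fixes x m D :: nat
  assumes "2 \<le> m" "1 \<le> x" "x \<le> 2*m+1"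
   "D = x - (if m+1 \<le> x then 1 else 0)"
  shows "(x \<le> m \<and> D = x) \<or> (m+1 \<le> x \<and> D + 1 = x)"
  using assms by (cases "x \<le> m"; simp)

lemma v_odd1:
  fixes x m D n d1 :: nat
  assumes "2 \<le> m" "1 \<le> x" "x \<le> 2*m+1" "n = 2*m+1"
   "D = n - x - (if x \<le> m then 1 else 0) - (if x + 1 = m \<or> x = m + 1 then 1 else if x = m then 2 else 0) + (if x = 1 then d1 else 0)"
  shows "(x+2 \<le> m \<and> x \<noteq> 1 \<and> D + x = 2*m) \<or> (x = 1 \<and> x+2 \<le> m \<and> D + 1 = 2*m + d1) \<or>
    (x + 1 = m \<and> x \<noteq> 1 \<and> D = m) \<or> (x = 1 \<and> m = 2 \<and> D = 2 + d1) \<or> (x = m \<and> D + 2 = m) \<or>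
    (x = m+1 \<and> D + 1 = m) \<or> (m+2 \<le> x \<and> D + x = 2*m+1)"
  using pos5'[of x m] assms
  by (elim disjE; cases "x = 1"; simp)

lemma Dg_eq: "Dg n p d1 k i = card {j\<in>{1..n}. j\<noteq>i \<and> colidx n p i j = k} + (if i = 1 \<and> k = 1 then d1 else 0)"
  unfolding Dg_def by simp

lemma up_even:
  assumes "n = 2*m" "2 \<le> m" "p = m+1" "i \<in> {1..n}" "j \<in> {1..n}" "i \<noteq> j"
  shows "Dg n p d1 (colidx n p i j) i \<noteq> Dg n p d1 (colidx n p i j) j"
proof -
  note a = deg_even[OF assms(1-3) assms(4)] deg_even[OF assms(1-3) assms(5)]
  have ij: "1 \<le> i" "i \<le> 2*m" "1 \<le> j" "j \<le> 2*m" using assms by auto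
  have cc: "isC p i j = ((i = m \<and> j = m+1) \<or> (i = m+1 \<and> j = m) \<or> (i = m+1 \<and> j = m+2) \<or> (i = m+2 \<and> j = m+1))"
    unfolding isC_eq assms(3) by auto
  have lt: "i < j \<or> j < i" using assms(6) by linarith
  consider "isC p i j" | "\<not> isC p i j" "n+1 \<le> i+j" | "\<not> isC p i j" "\<not> n+1 \<le> i+j" by blast
  then show ?thesis
  proof cases
    case 1
    then have ck: "colidx n p i j = 2" unfolding colidx_def by simp
    show ?thesis unfolding Dg_def ck a using 1 unfolding cc by auto
  next
    case 2
    then have ck: "colidx n p i j = 0" unfolding colidx_def by simp
    have s: "2*m+1 \<le> i+j" using 2 assms(1) by simp
    have nc: "\<not> ((i = m \<and> j = m+1) \<or> (i = m+1 \<and> j = m) \<or> (i = m+1 \<and> j = m+2) \<or> (i = m+2 \<and> j = m+1))"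
      using 2(1) unfolding cc .
    define Di where "Di = Dg n p d1 0 i"
    define Dj where "Dj = Dg n p d1 0 j"
    have vi: "(i < m \<and> Di = i) \<or> (i = m \<and> Di + 1 = m) \<or> (i = m+1 \<and> Di + 2 = m) \<or> (i = m+2 \<and> Di = m) \<or> (m+3 \<le> i \<and> Di + 1 = i)"
      by (rule v_even0[OF assms(2) ij(1,2)]) (unfold Di_def Dg_eq a, simp)
    have vj: "(j < m \<and> Dj = j) \<or> (j = m \<and> Dj + 1 = m) \<or> (j = m+1 \<and> Dj + 2 = m) \<or> (j = m+2 \<and> Dj = m) \<or> (m+3 \<le> j \<and> Dj + 1 = j)"
      by (rule v_even0[OF assms(2) ij(3,4)]) (unfold Dj_def Dg_eq a, simp)
    have "Di \<noteq> Dj" using lt vi vj s nc assms(2) ij by (elim disjE conjE; (linarith | blast))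
    then show ?thesis unfolding ck Di_def Dj_def .
  next
    case 3
    then have ck: "colidx n p i j = 1" unfolding colidx_def by simp
    have s: "i+j \<le> 2*m" using 3 assms(1) by simp
    define Di where "Di = Dg n p d1 1 i"
    define Dj where "Dj = Dg n p d1 1 j"
    have vi: "(i = 1 \<and> Di + 2 = 2*m + d1) \<or> (2 \<le> i \<and> i \<le> m \<and> Di + i + 1 = 2*m) \<or> (m+1 \<le> i \<and> Di + i = 2*m)"
      by (rule v_even1[OF assms(2) ij(1,2) assms(1)]) (unfold Di_def Dg_eq a, simp)
    have vj: "(j = 1 \<and> Dj + 2 = 2*m + d1) \<or> (2 \<le> j \<and> j \<le> m \<and> Dj + j + 1 = 2*m) \<or> (m+1 \<le> j \<and> Dj + j = 2*m)"
      by (rule v_even1[OF assms(2) ij(3,4) assms(1)]) (unfold Dj_def Dg_eq a, simp)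
    have "Di \<noteq> Dj" using lt vi vj s assms(2) ij by (elim disjE conjE; linarith)
    then show ?thesis unfolding ck Di_def Dj_def .
  qed
qed

lemma up_odd:
  assumes "n = 2*m+1" "2 \<le> m" "p = m" "i \<in> {1..n}" "j \<in> {1..n}" "i \<noteq> j"
  shows "Dg n p d1 (colidx n p i j) i \<noteq> Dg n p d1 (colidx n p i j) j"
proof -
  note a = deg_odd[OF assms(1-3) assms(4)] deg_odd[OF assms(1-3) assms(5)]
  have ij: "1 \<le> i" "i \<le> 2*m+1" "1 \<le> j" "j \<le> 2*m+1" using assms by auto
  have cc: "isC p i j = ((i+1 = m \<and> j = m) \<or> (i = m \<and> j+1 = m) \<or> (i = m \<and> j = m+1) \<or> (i = m+1 \<and> j = m))"
    unfolding isC_eq assms(3) using assms(2) by auto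
  have lt: "i < j \<or> j < i" using assms(6) by linarith
  consider "isC p i j" | "\<not> isC p i j" "n+1 \<le> i+j" | "\<not> isC p i j" "\<not> n+1 \<le> i+j" by blast
  then show ?thesis
  proof cases
    case 1
    then have ck: "colidx n p i j = 2" unfolding colidx_def by simp
    show ?thesis unfolding Dg_def ck a using 1 assms(2) unfolding cc by auto
  next
    case 2
    then have ck: "colidx n p i j = 0" unfolding colidx_def by simp
    have s: "2*m+2 \<le> i+j" using 2 assms(1) by simp
    define Di where "Di = Dg n p d1 0 i"
    define Dj where "Dj = Dg n p d1 0 j"
    have vi: "(i \<le> m \<and> Di = i) \<or> (m+1 \<le> i \<and> Di + 1 = i)"
      by (rule v_odd0[OF assms(2) ij(1,2)]) (unfold Di_def Dg_eq a, simp)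
    have vj: "(j \<le> m \<and> Dj = j) \<or> (m+1 \<le> j \<and> Dj + 1 = j)"
      by (rule v_odd0[OF assms(2) ij(3,4)]) (unfold Dj_def Dg_eq a, simp)
    have "Di \<noteq> Dj" using lt vi vj s assms(2) ij by (elim disjE conjE; linarith)
    then show ?thesis unfolding ck Di_def Dj_def .
  next
    case 3
    then have ck: "colidx n p i j = 1" unfolding colidx_def by simp
    have s: "i+j \<le> 2*m+1" using 3 assms(1) by simp
    have nc: "\<not> ((i+1 = m \<and> j = m) \<or> (i = m \<and> j+1 = m) \<or> (i = m \<and> j = m+1) \<or> (i = m+1 \<and> j = m))"
      using 3(1) unfolding cc .
    define Di where "Di = Dg n p d1 1 i"
    define Dj where "Dj = Dg n p d1 1 j"
    have vi: "(i+2 \<le> m \<and> i \<noteq> 1 \<and> Di + i = 2*m) \<or> (i = 1 \<and> i+2 \<le> m \<and> Di + 1 = 2*m + d1) \<or>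
    (i + 1 = m \<and> i \<noteq> 1 \<and> Di = m) \<or> (i = 1 \<and> m = 2 \<and> Di = 2 + d1) \<or> (i = m \<and> Di + 2 = m) \<or>
    (i = m+1 \<and> Di + 1 = m) \<or> (m+2 \<le> i \<and> Di + i = 2*m+1)"
      by (rule v_odd1[OF assms(2) ij(1,2) assms(1)]) (unfold Di_def Dg_eq a, simp)
    have vj: "(j+2 \<le> m \<and> j \<noteq> 1 \<and> Dj + j = 2*m) \<or> (j = 1 \<and> j+2 \<le> m \<and> Dj + 1 = 2*m + d1) \<or>
    (j + 1 = m \<and> j \<noteq> 1 \<and> Dj = m) \<or> (j = 1 \<and> m = 2 \<and> Dj = 2 + d1) \<or> (j = m \<and> Dj + 2 = m) \<or>
    (j = m+1 \<and> Dj + 1 = m) \<or> (m+2 \<le> j \<and> Dj + j = 2*m+1)"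
      by (rule v_odd1[OF assms(2) ij(3,4) assms(1)]) (unfold Dj_def Dg_eq a, simp)
    have "Di \<noteq> Dj" using lt vi vj s nc assms(2) ij by (elim disjE conjE; (linarith | blast))
    then show ?thesis unfolding ck Di_def Dj_def .
  qed
qed

lemma up_pend_even:
  assumes "n = 2*m" "2 \<le> m" "p = m+1"
  shows "Dg n p d1 1 1 \<ge> 2"
proof -
  have "(1::nat) \<in> {1..n}" using assms by auto
  note a = deg_even[OF assms(1-3) this]
  show ?thesis unfolding Dg_eq a using assms by simp
qed

lemma up_pend_odd:
  assumes "n = 2*m+1" "2 \<le> m" "p = m"
  shows "Dg n p d1 1 1 \<ge> 2"
proof -
  have "(1::nat) \<in> {1..n}" using assms by auto
  note a = deg_odd[OF assms(1-3) this]
  show ?thesis unfolding Dg_eq a using assms by (simp; arith)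
qed

definition dg :: "('b \<Rightarrow> 'b \<Rightarrow> bool) \<Rightarrow> 'b set \<Rightarrow> 'b \<Rightarrow> nat" where
  "dg adj S w = card {u\<in>S. u \<noteq> w \<and> adj w u}"

lemma thr:
  assumes sym: "\<And>x y. adj x y = adj y x"
  shows "finite W \<Longrightarrow> z \<notin> W \<Longrightarrow> inj_on (dg adj (insert z W)) W \<Longrightarrow>
    dg adj (insert z W) ` W = {0..<card W} \<Longrightarrow> w \<in> W \<Longrightarrow>
    (adj w z \<longleftrightarrow> (card W + 1) div 2 \<le> dg adj (insert z W) w)"
proof (induction "card W" arbitrary: W w rule: less_induct)
  case less
  define S where "S = insert z W"
  define c where "c = card W"
  have finS: "finite S" using less.prems(1) S_def by auto
  have cS: "card S = c + 1" using less.prems(1,2) S_def c_def by auto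
  have c1: "c \<ge> 1" using less.prems(1,5) c_def by (metis One_nat_def Suc_leI card_gt_0_iff empty_iff)
  show ?case
  proof (cases "c = 1")
    case True
    then have "dg adj S w = 0" using less.prems(4,5) S_def c_def by auto
    then have "{u\<in>S. u \<noteq> w \<and> adj w u} = {}" unfolding dg_def using finS by simp
    then have "\<not> adj w z" using S_def less.prems(2,5) by auto
    then show ?thesis using \<open>dg adj S w = 0\<close> True S_def c_def by simp
  next
    case False
    then have c2: "c \<ge> 2" using c1 by simp
    have "0 \<in> dg adj S ` W" using less.prems(4) c2 S_def c_def by auto
    then obtain w0 where w0: "w0 \<in> W" "dg adj S w0 = 0" by auto
    have "c - 1 \<in> dg adj S ` W" using less.prems(4) c2 S_def c_def by auto
    then obtain wt where wt: "wt \<in> W" "dg adj S wt = c - 1" by auto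
    have w0t: "w0 \<noteq> wt" using w0 wt c2 by auto
    have nadj: "\<And>u. u \<in> S \<Longrightarrow> u \<noteq> w0 \<Longrightarrow> \<not> adj w0 u"
    proof -
      fix u assume "u \<in> S" "u \<noteq> w0"
      have "{u\<in>S. u \<noteq> w0 \<and> adj w0 u} = {}" using w0(2) finS unfolding dg_def by simp
      then show "\<not> adj w0 u" using \<open>u \<in> S\<close> \<open>u \<noteq> w0\<close> by auto
    qed
    have Aeq: "{u\<in>S. u \<noteq> wt \<and> adj wt u} = S - {wt, w0}"
    proof (rule card_subset_eq)
      show "finite (S - {wt, w0})" using finS by simp
      show "{u\<in>S. u \<noteq> wt \<and> adj wt u} \<subseteq> S - {wt, w0}"
        using nadj sym w0t S_def w0(1) wt(1) by auto
      have "card (S - {wt, w0}) = c - 1" using cS w0 wt w0t S_def finS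
        by (simp add: card_Diff_subset)
      then show "card {u\<in>S. u \<noteq> wt \<and> adj wt u} = card (S - {wt, w0})"
        using wt(2) unfolding dg_def by simp
    qed
    have adjt: "\<And>u. u \<in> S \<Longrightarrow> u \<noteq> wt \<Longrightarrow> u \<noteq> w0 \<Longrightarrow> adj wt u"
      using Aeq by blast
    define W' where "W' = W - {w0, wt}"
    have SW': "insert z W' = S - {w0, wt}" using W'_def S_def less.prems(2) w0 wt by auto
    have cW': "card W' = c - 2" using W'_def c_def w0 wt w0t less.prems(1)
      by (simp add: card_Diff_subset)
    have dgW': "dg adj (insert z W') x = dg adj S x - 1 \<and> dg adj S x \<ge> 1" if "x \<in> W'" for x
    proof -
      have x: "x \<in> W" "x \<noteq> w0" "x \<noteq> wt" using that W'_def by auto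
      have xt: "adj x wt" using adjt[of x] x S_def sym by auto
      have eq: "{u\<in>insert z W'. u \<noteq> x \<and> adj x u} = {u\<in>S. u \<noteq> x \<and> adj x u} - {wt}"
      proof -
        have "x \<in> S" using x S_def by auto
        then have "\<not> adj w0 x" using nadj x by auto
        then have "\<not> adj x w0" using sym by auto
        then show ?thesis unfolding SW' using x by auto
      qed
      have mem: "wt \<in> {u\<in>S. u \<noteq> x \<and> adj x u}" using xt x S_def wt by auto
      have fin: "finite {u\<in>S. u \<noteq> x \<and> adj x u}" using finS by simp
      show ?thesis unfolding dg_def eq using mem fin
        by (metis (no_types, lifting) One_nat_def card_Diff_singleton card_gt_0_iff empty_iff less_eq_Suc_le)
    qed
    have inj': "inj_on (dg adj (insert z W')) W'"
    proof (rule inj_onI)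
      fix x y assume "x \<in> W'" "y \<in> W'" "dg adj (insert z W') x = dg adj (insert z W') y"
      then have "dg adj S x = dg adj S y" using dgW'[of x] dgW'[of y] by linarith
      then show "x = y" using less.prems(3) \<open>x \<in> W'\<close> \<open>y \<in> W'\<close> W'_def S_def
        by (meson DiffD1 inj_onD)
    qed
    have img1: "dg adj S ` W' = {0..<c} - {0, c-1}"
    proof -
      have "dg adj S ` W' = dg adj S ` W - dg adj S ` {w0, wt}"
        unfolding W'_def using less.prems(3) S_def w0 wt
        by (simp add: inj_on_image_set_diff)
      then show ?thesis using less.prems(4) S_def c_def w0 wt by auto
    qed
    have img: "dg adj (insert z W') ` W' = {0..<card W'}"
    proof -
      have "dg adj (insert z W') ` W' = (\<lambda>t. t - 1) ` (dg adj S ` W')"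
        using dgW' by (auto simp: image_image)
      also have "\<dots> = (\<lambda>t. t - 1) ` {1..<c-1}" unfolding img1 using c2 by (auto)
      also have "\<dots> = {0..<c-2}"
      proof
        show "(\<lambda>t. t - 1) ` {1..<c - 1} \<subseteq> {0..<c - 2}" by auto
        show "{0..<c - 2} \<subseteq> (\<lambda>t. t - 1) ` {1..<c - 1}"
        proof
          fix t assume "t \<in> {0..<c-2}"
          then have "t + 1 \<in> {1..<c-1}" "t = (t+1) - 1" by auto
          then show "t \<in> (\<lambda>t. t - 1) ` {1..<c - 1}" by blast
        qed
      qed
      finally show ?thesis using cW' by simp
    qed
    have lt: "card W' < card W" using cW' c_def c2 by simp
    have finW': "finite W'" using W'_def less.prems(1) by simp
    have zW': "z \<notin> W'" using W'_def less.prems(2) by simp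
    note IH = less.hyps[OF lt finW' zW' inj' img]
    consider "w = w0" | "w = wt" | "w \<in> W'" using less.prems(5) W'_def by auto
    then show ?thesis
    proof cases
      case 1
      have "\<not> adj w0 z" using nadj[of z] S_def less.prems(2) w0 by auto
      then show ?thesis using 1 w0(2) c2 c_def S_def by auto
    next
      case 2
      have "adj wt z" using adjt[of z] S_def less.prems(2) w0 wt by auto
      then show ?thesis using 2 wt(2) c2 c_def S_def by auto
    next
      case 3
      have "adj w z \<longleftrightarrow> (card W' + 1) div 2 \<le> dg adj (insert z W') w" using IH 3 by blast
      then show ?thesis using dgW'[OF 3] cW' c2 c_def S_def by auto
    qed
  qed
qed


definition fc :: "(nat \<Rightarrow> nat \<Rightarrow> nat) \<Rightarrow> nat \<Rightarrow> nat \<Rightarrow> nat \<Rightarrow> nat" where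
  "fc col n k i = card {j\<in>{1..n}. j \<noteq> i \<and> col i j = k}"

lemma fc_sum:
  assumes "\<forall>i\<in>{1..n}. \<forall>j\<in>{1..n}. col i j < 2" "i \<in> {1..n}"
  shows "fc col n 0 i + fc col n 1 i = n - 1"
proof -
  have "{j\<in>{1..n}. j \<noteq> i \<and> col i j = 0} \<union> {j\<in>{1..n}. j \<noteq> i \<and> col i j = 1} = {1..n} - {i}"
    using assms by force
  moreover have "{j\<in>{1..n}. j \<noteq> i \<and> col i j = 0} \<inter> {j\<in>{1..n}. j \<noteq> i \<and> col i j = 1} = {}" by auto
  ultimately have "card ({1..n} - {i}) = fc col n 0 i + fc col n 1 i"
    unfolding fc_def by (metis (no_types, lifting) card_Un_disjoint finite_Diff finite_atLeastAtMost finite_Un)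
  then show ?thesis using assms(2) by simp
qed

lemma core:
  fixes col :: "nat \<Rightarrow> nat \<Rightarrow> nat" and P :: "nat \<Rightarrow> nat"
  assumes sym: "\<forall>i j. col i j = col j i"
    and lt2: "\<forall>i\<in>{1..n}. \<forall>j\<in>{1..n}. col i j < 2"
    and k: "k < 2"
    and irr: "\<forall>i\<in>{1..n}. \<forall>j\<in>{1..n}. i \<noteq> j \<longrightarrow>
        fc col n (col i j) i + (if i = 1 then P (col i j) else 0) \<noteq> fc col n (col i j) j + (if j = 1 then P (col i j) else 0)"
    and inj: "inj_on (fc col n k) {2..n}"
    and img: "fc col n k ` {2..n} = {0..<n-1}"
    and Psum: "P 0 + P 1 = d1"
    and d1: "d1 < n div 2" and n4: "n \<ge> 4"
  shows False
proof -
  define k' where "k' = 1 - k"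
  have kk: "{k, k'} = {0, 1}" using k k'_def by auto
  have Pk: "P k + P k' = d1" using Psum k k'_def by (cases k) auto
  have fsum: "fc col n k i + fc col n k' i = n - 1" if "i \<in> {1..n}" for i
    using fc_sum[OF lt2 that] k k'_def by (cases k) auto
  have colk': "col i j = k'" if "i \<in> {1..n}" "j \<in> {1..n}" "col i j \<noteq> k" for i j
    using lt2 that k k'_def by force
  define adj where "adj = (\<lambda>a b. col a b = k)"
  have symA: "\<And>x y. adj x y = adj y x" unfolding adj_def using sym by auto
  have ins: "insert 1 {2..n} = {1..n}" using n4 by auto
  have dgf: "dg adj {1..n} w = fc col n k w" for w unfolding dg_def fc_def adj_def by simp
  have cW: "card {2..n} = n - 1" by simp
  have thr1: "\<forall>w\<in>{2..n}. (col w 1 = k \<longleftrightarrow> n div 2 \<le> fc col n k w)"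
  proof
    fix w assume w: "w \<in> {2..n}"
    have "adj w 1 \<longleftrightarrow> (card {2..n} + 1) div 2 \<le> dg adj (insert 1 {2..n}) w"
      using thr[where W="{2..n}" and z=1 and w=w and adj=adj, OF symA] inj img w unfolding ins dgf cW by auto
    then have "adj w 1 \<longleftrightarrow> n div 2 \<le> fc col n k w"
      unfolding ins dgf cW using n4 by simp
    then show "(col w 1 = k \<longleftrightarrow> n div 2 \<le> fc col n k w)"
      unfolding adj_def by simp
  qed
  have f1: "fc col n k 1 = n - 1 - n div 2"
  proof -
    have "{j\<in>{1..n}. j \<noteq> 1 \<and> col 1 j = k} = {w\<in>{2..n}. n div 2 \<le> fc col n k w}"
      using thr1 sym by force
    also have "\<dots> = {w\<in>{2..n}. fc col n k w \<in> {n div 2..<n-1}}" using img by auto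
    finally have e: "{j\<in>{1..n}. j \<noteq> 1 \<and> col 1 j = k} = {w\<in>{2..n}. fc col n k w \<in> {n div 2..<n-1}}" .
    have "card {w\<in>{2..n}. fc col n k w \<in> {n div 2..<n-1}} = card {n div 2..<n-1}"
    proof -
      have "bij_betw (fc col n k) {w\<in>{2..n}. fc col n k w \<in> {n div 2..<n-1}} {n div 2..<n-1}"
        unfolding bij_betw_def
      proof
        show "inj_on (fc col n k) {w \<in> {2..n}. fc col n k w \<in> {n div 2..<n - 1}}"
          using inj by (rule inj_on_subset) auto
        show "fc col n k ` {w \<in> {2..n}. fc col n k w \<in> {n div 2..<n - 1}} = {n div 2..<n - 1}"
        proof
          show "fc col n k ` {w \<in> {2..n}. fc col n k w \<in> {n div 2..<n - 1}} \<subseteq> {n div 2..<n - 1}" by auto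
          show "{n div 2..<n - 1} \<subseteq> fc col n k ` {w \<in> {2..n}. fc col n k w \<in> {n div 2..<n - 1}}"
          proof
            fix t assume t: "t \<in> {n div 2..<n - 1}"
            then have "t \<in> fc col n k ` {2..n}" using img by auto
            then obtain w where "w \<in> {2..n}" "fc col n k w = t" by auto
            then show "t \<in> fc col n k ` {w \<in> {2..n}. fc col n k w \<in> {n div 2..<n - 1}}" using t by auto
          qed
        qed
      qed
      then show ?thesis by (rule bij_betw_same_card)
    qed
    then show ?thesis unfolding fc_def e by simp
  qed
  have f1': "fc col n k' 1 = n div 2" using fsum[of 1] f1 n4 by auto
  have exw: "\<exists>w\<in>{2..n}. fc col n k w = t" if "t < n - 1" for t
    using img that by (metis atLeastLessThan_iff image_iff zero_le)
  have rne: "fc col n k 1 + P k \<noteq> t" if h1: "n div 2 \<le> t" and h2: "t < n - 1" for t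
  proof -
    obtain w where w: "w \<in> {2..n}" "fc col n k w = t" using exw[OF h2] by auto
    have c: "col 1 w = k" using thr1 w h1 sym by auto
    have "1 \<in> {1..n}" "w \<in> {1..n}" "1 \<noteq> w" using w n4 by auto
    then show ?thesis using irr c w by fastforce
  qed
  have bne: "fc col n k' 1 + P k' \<noteq> n - 1 - t" if h1: "t < n div 2" for t
  proof -
    have "t < n - 1" using h1 n4 by auto
    then obtain w where w: "w \<in> {2..n}" "fc col n k w = t" using exw by blast
    have "col w 1 \<noteq> k" using thr1 w h1 by auto
    then have c: "col 1 w = k'" using colk'[of 1 w] w sym by auto
    have fw: "fc col n k' w = n - 1 - t" using fsum[of w] w by auto
    have "1 \<in> {1..n}" "w \<in> {1..n}" "1 \<noteq> w" using w n4 by auto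
    then show ?thesis using irr c w fw by fastforce
  qed
  show False
  proof (cases "P k' = 0")
    case False
    have "n - 1 - (n div 2 + P k') < n div 2" "n - 1 - (n - 1 - (n div 2 + P k')) = n div 2 + P k'"
      using False Pk d1 n4 by auto
    then show False using bne[of "n - 1 - (n div 2 + P k')"] f1' by auto
  next
    case True
    show False
    proof (cases "even n")
      case True
      have "n div 2 - 1 < n div 2" "n - 1 - (n div 2 - 1) = n div 2" using n4 True by auto
      then show False using bne[of "n div 2 - 1"] f1' \<open>P k' = 0\<close> by auto
    next
      case False
      have "n div 2 \<le> n div 2 + d1" "n div 2 + d1 < n - 1" "n - 1 - n div 2 = n div 2"
        using False d1 n4 by auto presburger+
      then show False using rne[of "n div 2 + d1"] f1 \<open>P k' = 0\<close> Pk by auto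
    qed
  qed
qed


lemma lower_idx:
  fixes col :: "nat \<Rightarrow> nat \<Rightarrow> nat" and P :: "nat \<Rightarrow> nat"
  assumes sym: "\<forall>i j. col i j = col j i"
    and lt2: "\<forall>i\<in>{1..n}. \<forall>j\<in>{1..n}. col i j < 2"
    and irr: "\<forall>i\<in>{1..n}. \<forall>j\<in>{1..n}. i \<noteq> j \<longrightarrow>
        fc col n (col i j) i + (if i = 1 then P (col i j) else 0) \<noteq> fc col n (col i j) j + (if j = 1 then P (col i j) else 0)"
    and Psum: "P 0 + P 1 = d1"
    and d1: "d1 < n div 2" and n4: "n \<ge> 4"
  shows False
proof -
  let ?W = "{2..n}"
  have fsum: "fc col n 0 i + fc col n 1 i = n - 1" if "i \<in> {1..n}" for i
    using fc_sum[OF lt2 that] .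
  have inj0: "inj_on (fc col n 0) ?W"
  proof (rule inj_onI)
    fix i j assume ij: "i \<in> ?W" "j \<in> ?W" "fc col n 0 i = fc col n 0 j"
    show "i = j"
    proof (rule ccontr)
      assume "i \<noteq> j"
      have ij1: "i \<in> {1..n}" "j \<in> {1..n}" "i \<noteq> 1" "j \<noteq> 1" using ij by auto
      have "fc col n 1 i = fc col n 1 j" using fsum[of i] fsum[of j] ij1 ij(3) by simp
      moreover have "col i j = 0 \<or> col i j = 1" using lt2 ij1 by force
      ultimately have "fc col n (col i j) i = fc col n (col i j) j"
        using ij(3) by auto
      moreover have "fc col n (col i j) i + (if i = 1 then P (col i j) else 0) \<noteq> fc col n (col i j) j + (if j = 1 then P (col i j) else 0)"
        using irr ij1(1,2) \<open>i \<noteq> j\<close> by (simp only: Ball_def) blast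
      ultimately show False using ij1 by simp
    qed
  qed
  have inj1: "inj_on (fc col n 1) ?W"
  proof (rule inj_onI)
    fix i j assume ij: "i \<in> ?W" "j \<in> ?W" "fc col n 1 i = fc col n 1 j"
    have "fc col n 0 i = fc col n 0 j" using fsum[of i] fsum[of j] ij by simp
    then show "i = j" using inj0 ij by (meson inj_onD)
  qed
  have le: "fc col n 0 i \<le> n - 1" if "i \<in> {1..n}" for i using fsum[OF that] by simp
  have c0: "card (fc col n 0 ` ?W) = n - 1" using card_image[OF inj0] by simp
  have not_both: "\<not> (0 \<in> fc col n 0 ` ?W \<and> n - 1 \<in> fc col n 0 ` ?W)"
  proof
    assume "0 \<in> fc col n 0 ` ?W \<and> n - 1 \<in> fc col n 0 ` ?W"
    then obtain a b where ab: "a \<in> ?W" "fc col n 0 a = n - 1" "b \<in> ?W" "fc col n 0 b = 0" by force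
    have "a \<noteq> b" using ab n4 by auto
    have eqA: "{j\<in>{1..n}. j \<noteq> a \<and> col a j = 0} = {1..n} - {a}"
    proof (rule card_subset_eq)
      show "finite ({1..n} - {a})" by simp
      show "{j\<in>{1..n}. j \<noteq> a \<and> col a j = 0} \<subseteq> {1..n} - {a}" by auto
      show "card {j\<in>{1..n}. j \<noteq> a \<and> col a j = 0} = card ({1..n} - {a})"
        using ab(1,2) unfolding fc_def by simp
    qed
    have bmem: "b \<in> {1..n} - {a}" using ab \<open>a \<noteq> b\<close> by auto
    have "b \<in> {j\<in>{1..n}. j \<noteq> a \<and> col a j = 0}" by (subst eqA) (rule bmem)
    then have "col a b = 0" by simp
    then have "col b a = 0" using sym by metis
    then have "a \<in> {j\<in>{1..n}. j \<noteq> b \<and> col b j = 0}" using ab \<open>a \<noteq> b\<close> by auto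
    moreover have "finite {j\<in>{1..n}. j \<noteq> b \<and> col b j = 0}" by simp
    ultimately have "fc col n 0 b > 0" unfolding fc_def by (simp add: card_gt_0_iff) blast
    then show False using ab by simp
  qed
  show False
  proof (cases "n - 1 \<in> fc col n 0 ` ?W")
    case False
    have "fc col n 0 ` ?W \<subseteq> {0..<n-1}" proof
      fix t assume "t \<in> fc col n 0 ` ?W"
      then obtain i where "i \<in> ?W" "t = fc col n 0 i" by auto
      then show "t \<in> {0..<n-1}" using le[of i] False by (cases "t = n - 1") auto
    qed
    then have img: "fc col n 0 ` ?W = {0..<n-1}" using c0 by (simp add: card_subset_eq)
    show False by (rule core[OF sym lt2 _ irr inj0 img Psum d1 n4]) simp
  next
    case True
    then have n0: "0 \<notin> fc col n 0 ` ?W" using not_both by blast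
    have "fc col n 0 ` ?W \<subseteq> {1..<n}" proof
      fix t assume "t \<in> fc col n 0 ` ?W"
      then obtain i where "i \<in> ?W" "t = fc col n 0 i" by auto
      then show "t \<in> {1..<n}" using le[of i] n0 n4 by (cases "t = 0") auto
    qed
    then have img0: "fc col n 0 ` ?W = {1..<n}" using c0 by (simp add: card_subset_eq)
    have img: "fc col n 1 ` ?W = {0..<n-1}"
    proof -
      have "fc col n 1 ` ?W = (\<lambda>i. n - 1 - fc col n 0 i) ` ?W"
      proof (rule image_cong)
        fix i assume "i \<in> ?W"
        then show "fc col n 1 i = n - 1 - fc col n 0 i" using fsum[of i] by auto
      qed simp
      also have "\<dots> = (\<lambda>t. n - 1 - t) ` (fc col n 0 ` ?W)" by (simp add: image_image)
      also have "\<dots> = {0..<n-1}" unfolding img0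
      proof
        show "(\<lambda>t. n - 1 - t) ` {1..<n} \<subseteq> {0..<n - 1}" by auto
        show "{0..<n - 1} \<subseteq> (\<lambda>t. n - 1 - t) ` {1..<n}"
        proof
          fix t assume "t \<in> {0..<n-1}"
          then have "n - 1 - t \<in> {1..<n}" "t = n - 1 - (n - 1 - t)" by auto
          then show "t \<in> (\<lambda>t. n - 1 - t) ` {1..<n}" by blast
        qed
      qed
      finally show ?thesis .
    qed
    show False by (rule core[OF sym lt2 _ irr inj1 img Psum d1 n4]) simp
  qed
qed

lemma colidx_sym: "colidx n p i j = colidx n p j i"
  unfolding colidx_def isC_def by (simp add: insert_commute add.commute)

lemma colidx_le: "colidx n p i j < 3"
  unfolding colidx_def by auto

lemma edge_char:
  fixes v :: "nat \<Rightarrow> 'a" and n :: nat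
  assumes G: "simple_graph V E"
    and X_def: "X = v ` {1..n}" and v_inj: "inj_on v {1..n}"
    and XV: "X \<subseteq> V" and Y_def: "Y = V - X"
    and clique: "\<forall>x\<in>X. \<forall>x'\<in>X. x \<noteq> x' \<longrightarrow> {x, x'} \<in> E"
    and stable: "\<forall>y\<in>Y. \<forall>y'\<in>Y. {y, y'} \<notin> E"
    and noY: "\<forall>i\<in>{2..n}. \<forall>y\<in>Y. {v i, y} \<notin> E"
    and P_def: "P = {y\<in>Y. {v 1, y} \<in> E}"
  shows "e \<in> E \<longleftrightarrow> (\<exists>i\<in>{1..n}. \<exists>j\<in>{1..n}. i \<noteq> j \<and> e = {v i, v j}) \<or> (\<exists>y\<in>P. e = {v 1, y})"
proof
  assume e: "e \<in> E"
  then obtain u w where uw: "u \<noteq> w" "u \<in> V" "w \<in> V" "e = {u, w}"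
    using G unfolding simple_graph_def by blast
  have xy: "x \<in> X \<or> x \<in> Y" if "x \<in> V" for x using that Y_def by auto
  have vy: "\<exists>i\<in>{1..n}. x = v i" if "x \<in> X" for x using that X_def by auto
  have mix: "\<exists>y\<in>P. e = {v 1, y}" if ha: "a \<in> X" and hb: "b \<in> Y" and he: "e = {a, b}" for a b
  proof -
    obtain i where i: "i \<in> {1..n}" "a = v i" using vy ha by blast
    have "i = 1"
    proof (rule ccontr)
      assume "i \<noteq> 1"
      then have "i \<in> {2..n}" using i by auto
      then show False using noY hb he e i by auto
    qed
    then show ?thesis using hb he e i P_def by auto
  qed
  show "(\<exists>i\<in>{1..n}. \<exists>j\<in>{1..n}. i \<noteq> j \<and> e = {v i, v j}) \<or> (\<exists>y\<in>P. e = {v 1, y})"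
  proof (cases "u \<in> X")
    case True
    show ?thesis
    proof (cases "w \<in> X")
      case True
      obtain i j where "i \<in> {1..n}" "u = v i" "j \<in> {1..n}" "w = v j" using vy \<open>u \<in> X\<close> True by blast
      moreover have "i \<noteq> j" using calculation uw by auto
      ultimately show ?thesis using uw by blast
    next
      case False
      then have "w \<in> Y" using xy uw by auto
      then show ?thesis using mix[of u w] \<open>u \<in> X\<close> uw by auto
    qed
  next
    case False
    then have uY: "u \<in> Y" using xy uw by auto
    show ?thesis
    proof (cases "w \<in> X")
      case True
      then show ?thesis using mix[of w u] uY uw by (auto simp: insert_commute)
    next
      case False
      then have "w \<in> Y" using xy uw by auto
      then show ?thesis using stable uY uw e by auto
    qed
  qed
next
  assume "(\<exists>i\<in>{1..n}. \<exists>j\<in>{1..n}. i \<noteq> j \<and> e = {v i, v j}) \<or> (\<exists>y\<in>P. e = {v 1, y})"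
  then show "e \<in> E"
  proof
    assume "\<exists>i\<in>{1..n}. \<exists>j\<in>{1..n}. i \<noteq> j \<and> e = {v i, v j}"
    then obtain i j where "i \<in> {1..n}" "j \<in> {1..n}" "i \<noteq> j" "e = {v i, v j}" by blast
    moreover have "v i \<noteq> v j" using v_inj calculation by (meson inj_onD)
    ultimately show ?thesis using clique X_def by auto
  next
    assume "\<exists>y\<in>P. e = {v 1, y}"
    then show ?thesis using P_def by auto
  qed
qed


lemma deg_X:
  fixes v :: "nat \<Rightarrow> 'a" and n :: nat and c :: "'a set \<Rightarrow> nat"
  assumes Ech: "\<And>e. e \<in> E \<longleftrightarrow> (\<exists>i\<in>{1..n}. \<exists>j\<in>{1..n}. i \<noteq> j \<and> e = {v i, v j}) \<or> (\<exists>y\<in>P. e = {v 1, y})"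
    and inj: "inj_on v {1..n}" and PX: "\<forall>y\<in>P. y \<notin> v ` {1..n}" and finP: "finite P"
    and i: "i \<in> {1..n}"
  shows "edeg {e\<in>E. c e = k} (v i) = card {j\<in>{1..n}. j \<noteq> i \<and> c {v i, v j} = k}
            + (if i = 1 then card {y\<in>P. c {v 1, y} = k} else 0)"
proof -
  define J where "J = {j\<in>{1..n}. j \<noteq> i \<and> c {v i, v j} = k}"
  define Q where "Q = (if i = 1 then {y\<in>P. c {v 1, y} = k} else {})"
  have n1: "1 \<in> {1..n}" using i by auto
  have eq: "{e\<in>{e\<in>E. c e = k}. v i \<in> e} = (\<lambda>j. {v i, v j}) ` J \<union> (\<lambda>y. {v 1, y}) ` Q"
  proof
    show "{e\<in>{e\<in>E. c e = k}. v i \<in> e} \<subseteq> (\<lambda>j. {v i, v j}) ` J \<union> (\<lambda>y. {v 1, y}) ` Q"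
    proof
      fix e assume "e \<in> {e\<in>{e\<in>E. c e = k}. v i \<in> e}"
      then have e: "e \<in> E" "c e = k" "v i \<in> e" by auto
      from e(1) Ech consider (X) a b where "a \<in> {1..n}" "b \<in> {1..n}" "a \<noteq> b" "e = {v a, v b}"
        | (Y) y where "y \<in> P" "e = {v 1, y}" by blast
      then show "e \<in> (\<lambda>j. {v i, v j}) ` J \<union> (\<lambda>y. {v 1, y}) ` Q"
      proof cases
        case X
        then have "v i = v a \<or> v i = v b" using e by auto
        then have "i = a \<or> i = b" using inj X i by (meson inj_onD)
        then show ?thesis
        proof
          assume "i = a"
          then have "b \<in> J" "e = {v i, v b}" using X e unfolding J_def by auto
          then show ?thesis by blast
        next
          assume "i = b"
          then have "a \<in> J" "e = {v i, v a}" using X e unfolding J_def by (auto simp: insert_commute)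
          then show ?thesis by blast
        qed
      next
        case Y
        then have "v i = v 1 \<or> v i = y" using e by auto
        moreover have "v i \<noteq> y" using PX Y i by auto
        ultimately have "i = 1" using inj i n1 by (meson inj_onD)
        then have "y \<in> Q" using Y e unfolding Q_def by auto
        then show ?thesis using Y by blast
      qed
    qed
    show "(\<lambda>j. {v i, v j}) ` J \<union> (\<lambda>y. {v 1, y}) ` Q \<subseteq> {e\<in>{e\<in>E. c e = k}. v i \<in> e}"
    proof
      fix e assume "e \<in> (\<lambda>j. {v i, v j}) ` J \<union> (\<lambda>y. {v 1, y}) ` Q"
      then consider (X) j where "j \<in> J" "e = {v i, v j}" | (Y) y where "y \<in> Q" "e = {v 1, y}" by blast
      then show "e \<in> {e\<in>{e\<in>E. c e = k}. v i \<in> e}"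
      proof cases
        case X
        then have "e \<in> E" using Ech i unfolding J_def by blast
        then show ?thesis using X unfolding J_def by auto
      next
        case Y
        then have "i = 1" "y \<in> P" "c {v 1, y} = k" unfolding Q_def by (auto split: if_splits)
        then have "e \<in> E" using Ech Y by blast
        then show ?thesis using Y \<open>i = 1\<close> \<open>c {v 1, y} = k\<close> by auto
      qed
    qed
  qed
  have inj1: "inj_on (\<lambda>j. {v i, v j}) J"
  proof (rule inj_onI)
    fix a b assume ab: "a \<in> J" "b \<in> J" "{v i, v a} = {v i, v b}"
    have "v a \<noteq> v i" using ab(1) inj i unfolding J_def by (auto dest: inj_onD)
    then have "v a = v b" using ab(3) by (auto simp: doubleton_eq_iff)
    then show "a = b" using inj ab(1,2) unfolding J_def by (auto dest: inj_onD)
  qed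
  have inj2: "inj_on (\<lambda>y. {v 1, y}) Q"
  proof (rule inj_onI)
    fix a b assume ab: "a \<in> Q" "b \<in> Q" "{v 1, a} = {v 1, b}"
    have "a \<noteq> v 1" using ab(1) PX n1 unfolding Q_def by (auto split: if_splits)
    then show "a = b" using ab(3) by (auto simp: doubleton_eq_iff)
  qed
  have disj: "(\<lambda>j. {v i, v j}) ` J \<inter> (\<lambda>y. {v 1, y}) ` Q = {}"
  proof -
    have "{v i, v j} \<noteq> {v 1, y}" if "j \<in> J" "y \<in> Q" for j y
    proof
      assume "{v i, v j} = {v 1, y}"
      then have "y = v i \<or> y = v j" by (auto simp: doubleton_eq_iff)
      moreover have "j \<in> {1..n}" using that(1) unfolding J_def by auto
      ultimately have "y \<in> v ` {1..n}" using i by auto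
      then show False using PX that unfolding Q_def by (auto split: if_splits)
    qed
    then show ?thesis by blast
  qed
  have finJ: "finite J" unfolding J_def by simp
  have finQ: "finite Q" unfolding Q_def using finP by simp
  have "edeg {e\<in>E. c e = k} (v i) = card ((\<lambda>j. {v i, v j}) ` J \<union> (\<lambda>y. {v 1, y}) ` Q)"
    unfolding edeg_def eq[symmetric] by simp
  also have "\<dots> = card J + card Q"
    using card_Un_disjoint[OF finite_imageI[OF finJ] finite_imageI[OF finQ] disj]
      card_image[OF inj1] card_image[OF inj2] by simp
  finally show ?thesis unfolding J_def Q_def by simp
qed

lemma deg_P:
  fixes v :: "nat \<Rightarrow> 'a" and n :: nat and c :: "'a set \<Rightarrow> nat"
  assumes Ech: "\<And>e. e \<in> E \<longleftrightarrow> (\<exists>i\<in>{1..n}. \<exists>j\<in>{1..n}. i \<noteq> j \<and> e = {v i, v j}) \<or> (\<exists>y\<in>P. e = {v 1, y})"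
    and PX: "\<forall>y\<in>P. y \<notin> v ` {1..n}" and n1: "1 \<le> n"
    and y: "y \<in> P"
  shows "edeg {e\<in>E. c e = k} y = (if c {v 1, y} = k then 1 else 0)"
proof -
  have yn: "y \<noteq> v 1" using PX y n1 by auto
  have "{e\<in>{e\<in>E. c e = k}. y \<in> e} = (if c {v 1, y} = k then {{v 1, y}} else {})"
  proof -
    have "e = {v 1, y}" if "e \<in> E" "y \<in> e" for e
    proof -
      from that(1) Ech consider (X) a b where "a \<in> {1..n}" "b \<in> {1..n}" "a \<noteq> b" "e = {v a, v b}"
        | (Y) y' where "y' \<in> P" "e = {v 1, y'}" by blast
      then show ?thesis
      proof cases
        case X
        then have "y = v a \<or> y = v b" using that(2) by auto
        then have "y \<in> v ` {1..n}" using X by auto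
        then show ?thesis using PX y by auto
      next
        case Y
        then have "y = v 1 \<or> y = y'" using that(2) by auto
        then show ?thesis using Y yn by auto
      qed
    qed
    moreover have "{v 1, y} \<in> E" using Ech y by blast
    ultimately have eqy: "{e\<in>E. y \<in> e} = {{v 1, y}}" by blast
    show ?thesis
    proof (cases "c {v 1, y} = k")
      case True
      have "{e\<in>{e\<in>E. c e = k}. y \<in> e} = {e\<in>E. y \<in> e} \<inter> {e. c e = k}" by blast
      also have "\<dots> = {{v 1, y}}" unfolding eqy using True by blast
      finally show ?thesis using True by simp
    next
      case False
      have "{e\<in>{e\<in>E. c e = k}. y \<in> e} = {e\<in>E. y \<in> e} \<inter> {e. c e = k}" by blast
      also have "\<dots> = {}" unfolding eqy using False by blast
      finally show ?thesis using False by simp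
    qed
  qed
  then show ?thesis unfolding edeg_def by simp
qed


lemma up_all:
  assumes "n \<ge> 4" "p = (if even n then n div 2 + 1 else n div 2)"
  shows "\<forall>i\<in>{1..n}. \<forall>j\<in>{1..n}. i \<noteq> j \<longrightarrow> Dg n p d1 (colidx n p i j) i \<noteq> Dg n p d1 (colidx n p i j) j"
    and "Dg n p d1 1 1 \<ge> 2"
proof -
  define m where "m = n div 2"
  have "(n = 2*m \<and> 2 \<le> m \<and> p = m+1) \<or> (n = 2*m+1 \<and> 2 \<le> m \<and> p = m)"
    using assms unfolding m_def by (cases "even n") (auto elim: evenE oddE)
  then have "(\<forall>i\<in>{1..n}. \<forall>j\<in>{1..n}. i \<noteq> j \<longrightarrow> Dg n p d1 (colidx n p i j) i \<noteq> Dg n p d1 (colidx n p i j) j)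
     \<and> Dg n p d1 1 1 \<ge> 2"
  proof
    assume h: "n = 2*m \<and> 2 \<le> m \<and> p = m+1"
    then show ?thesis using up_even[of n m p] up_pend_even[of n m p] by blast
  next
    assume h: "n = 2*m+1 \<and> 2 \<le> m \<and> p = m"
    then show ?thesis using up_odd[of n m p] up_pend_odd[of n m p] by blast
  qed
  then show "\<forall>i\<in>{1..n}. \<forall>j\<in>{1..n}. i \<noteq> j \<longrightarrow> Dg n p d1 (colidx n p i j) i \<noteq> Dg n p d1 (colidx n p i j) j"
    and "Dg n p d1 1 1 \<ge> 2" by auto
qed

theorem lemma2p3:
  fixes V :: "'a set" and E :: "'a set set" and X Y :: "'a set"
    and v :: "nat \<Rightarrow> 'a" and n :: nat and d :: "nat \<Rightarrow> nat"
  assumes G: "simple_graph V E"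
    and X_def: "X = v ` {1..n}" and v_inj: "inj_on v {1..n}"
    and XV: "X \<subseteq> V" and Y_def: "Y = V - X"
    and clique: "\<forall>x\<in>X. \<forall>x'\<in>X. x \<noteq> x' \<longrightarrow> {x, x'} \<in> E"
    and maximal: "\<forall>y\<in>Y. \<exists>x\<in>X. {x, y} \<notin> E"
    and stable: "\<forall>y\<in>Y. \<forall>y'\<in>Y. {y, y'} \<notin> E"
    and d_def: "\<forall>i\<in>{1..n}. d i = card {y\<in>Y. {v i, y} \<in> E}"
    and d_mono: "\<forall>i\<in>{1..n}. \<forall>j\<in>{1..n}. i \<le> j \<longrightarrow> d j \<le> d i"
    and n4: "n \<ge> 4"
    and d1: "d 1 < n div 2"
    and d2: "d 2 = 0"
  shows "irr_decomposable E \<and> chi_irr E = 3"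
proof -
  have finV: "finite V" using G unfolding simple_graph_def by simp
  have finY: "finite Y" using finV Y_def by simp
  define P where "P = {y\<in>Y. {v 1, y} \<in> E}"
  have n1: "1 \<in> {1..n}" and n2: "2 \<in> {1..n}" using n4 by auto
  have noY: "\<forall>i\<in>{2..n}. \<forall>y\<in>Y. {v i, y} \<notin> E"
  proof (intro ballI)
    fix i y assume i: "i \<in> {2..n}" and y: "y \<in> Y"
    have "d i \<le> d 2" using d_mono i n2 by auto
    then have "card {y\<in>Y. {v i, y} \<in> E} = 0" using d_def i d2 by auto
    then have "{y\<in>Y. {v i, y} \<in> E} = {}" using finY by simp
    then show "{v i, y} \<notin> E" using y by auto
  qed
  have Ech: "\<And>e. e \<in> E \<longleftrightarrow> (\<exists>i\<in>{1..n}. \<exists>j\<in>{1..n}. i \<noteq> j \<and> e = {v i, v j}) \<or> (\<exists>y\<in>P. e = {v 1, y})"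
    using edge_char[OF G X_def v_inj XV Y_def clique stable noY P_def] by blast
  have PX: "\<forall>y\<in>P. y \<notin> v ` {1..n}" using P_def Y_def X_def by auto
  have finP: "finite P" using finY P_def by simp
  have cardP: "card P = d 1" using d_def n1 P_def by simp
  have n1': "1 \<le> n" using n4 by simp
  have degX: "\<And>(c :: 'a set \<Rightarrow> nat) k i. i \<in> {1..n} \<Longrightarrow> edeg {e\<in>E. c e = k} (v i) = card {j\<in>{1..n}. j \<noteq> i \<and> c {v i, v j} = k}
            + (if i = 1 then card {y\<in>P. c {v 1, y} = k} else 0)"
    by (rule deg_X[OF Ech v_inj PX finP])
  have degP: "\<And>(c :: 'a set \<Rightarrow> nat) k y. y \<in> P \<Longrightarrow> edeg {e\<in>E. c e = k} y = (if c {v 1, y} = k then 1 else 0)"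
    by (rule deg_P[OF Ech PX n1'])
  have vij: "v i \<noteq> v j" if "i \<in> {1..n}" "j \<in> {1..n}" "i \<noteq> j" for i j
    using v_inj that by (meson inj_onD)
  have E12: "{v 1, v 2} \<in> E"
  proof -
    have neq: "(1::nat) \<noteq> 2" by simp
    have "\<exists>i\<in>{1..n}. \<exists>j\<in>{1..n}. i \<noteq> j \<and> {v 1, v 2} = {v i, v j}"
    proof (rule bexI[where x=1])
      show "\<exists>j\<in>{1..n}. 1 \<noteq> j \<and> {v 1, v 2} = {v 1, v j}"
        by (rule bexI[where x=2]) (use neq n2 in simp_all)
    qed (rule n1)
    then show ?thesis by (subst Ech) (rule disjI1)
  qed
  have inEij: "{v i, v j} \<in> E" if "i \<in> {1..n}" "j \<in> {1..n}" "i \<noteq> j" for i j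
    using that by (subst Ech) blast
  have inEy: "{v 1, y} \<in> E" if "y \<in> P" for y
    using that by (subst Ech) blast
  have no2: "\<not> irr_decomp_k E 2"
  proof
    assume "irr_decomp_k E 2"
    then obtain c :: "'a set \<Rightarrow> nat" where c: "\<forall>e\<in>E. c e < 2" "\<forall>i<2. locally_irregular {e\<in>E. c e = i}"
      unfolding irr_decomp_k_def by blast
    define col where "col = (\<lambda>i j. if i = j then 0 else c {v i, v j})"
    define Pf where "Pf = (\<lambda>k. card {y\<in>P. c {v 1, y} = k})"
    have sym: "\<forall>i j. col i j = col j i" unfolding col_def by (simp add: insert_commute)
    have lt2: "\<forall>i\<in>{1..n}. \<forall>j\<in>{1..n}. col i j < 2"
    proof (intro ballI)
      fix i j assume "i \<in> {1..n}" "j \<in> {1..n}"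
      then show "col i j < 2" using c(1) inEij unfolding col_def by (cases "i = j") auto
    qed
    have Psum: "Pf 0 + Pf 1 = d 1"
    proof -
      have "{y\<in>P. c {v 1, y} = 0} \<union> {y\<in>P. c {v 1, y} = 1} = P"
      proof
        show "{y\<in>P. c {v 1, y} = 0} \<union> {y\<in>P. c {v 1, y} = 1} \<subseteq> P" by auto
        show "P \<subseteq> {y\<in>P. c {v 1, y} = 0} \<union> {y\<in>P. c {v 1, y} = 1}"
        proof
          fix y assume "y \<in> P"
          then have "{v 1, y} \<in> E" by (rule inEy)
          then have "c {v 1, y} < 2" using c(1) by auto
          then show "y \<in> {y\<in>P. c {v 1, y} = 0} \<union> {y\<in>P. c {v 1, y} = 1}" using \<open>y \<in> P\<close> by auto
        qed
      qed
      moreover have "{y\<in>P. c {v 1, y} = 0} \<inter> {y\<in>P. c {v 1, y} = 1} = {}" by auto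
      ultimately have "card P = Pf 0 + Pf 1" unfolding Pf_def using finP
        by (metis (no_types, lifting) card_Un_disjoint finite_Un)
      then show ?thesis using cardP by simp
    qed
    have fceq: "fc col n k i = card {j\<in>{1..n}. j \<noteq> i \<and> c {v i, v j} = k}" for k i
    proof -
      have "{j\<in>{1..n}. j \<noteq> i \<and> col i j = k} = {j\<in>{1..n}. j \<noteq> i \<and> c {v i, v j} = k}"
        unfolding col_def by auto
      then show ?thesis unfolding fc_def by simp
    qed
    have irr: "\<forall>i\<in>{1..n}. \<forall>j\<in>{1..n}. i \<noteq> j \<longrightarrow>
        fc col n (col i j) i + (if i = 1 then Pf (col i j) else 0) \<noteq> fc col n (col i j) j + (if j = 1 then Pf (col i j) else 0)"
    proof (intro ballI impI)
      fix i j assume ij: "i \<in> {1..n}" "j \<in> {1..n}" "i \<noteq> j"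
      define k where "k = c {v i, v j}"
      have ck: "col i j = k" unfolding col_def k_def using ij by simp
      have inE: "{v i, v j} \<in> E" using inEij ij by blast
      then have "k < 2" using c(1) k_def by auto
      then have LI: "locally_irregular {e\<in>E. c e = k}" using c(2) by auto
      have "{v i, v j} \<in> {e\<in>E. c e = k}" using inE k_def by simp
      then have "edeg {e\<in>E. c e = k} (v i) \<noteq> edeg {e\<in>E. c e = k} (v j)"
        using LI vij[OF ij] unfolding locally_irregular_def by blast
      then show "fc col n (col i j) i + (if i = 1 then Pf (col i j) else 0) \<noteq> fc col n (col i j) j + (if j = 1 then Pf (col i j) else 0)"
        unfolding ck fceq Pf_def using degX[OF ij(1), of c k] degX[OF ij(2), of c k] by simp
    qed
    show False by (rule lower_idx[OF sym lt2 irr Psum d1 n4])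
  qed
  define idx where "idx = inv_into {1..n} v"
  define p where "p = (if even n then n div 2 + 1 else n div 2)"
  define c where "c = (\<lambda>e. if e \<subseteq> X then colidx n p (Min (idx ` e)) (Max (idx ` e)) else 1)"
  have cX: "c {v i, v j} = colidx n p i j" if "i \<in> {1..n}" "j \<in> {1..n}" for i j
  proof -
    have sub: "{v i, v j} \<subseteq> X" using that X_def by auto
    have "idx ` {v i, v j} = {i, j}" unfolding idx_def using that v_inj by (simp add: inv_into_f_f)
    then have "Min (idx ` {v i, v j}) = min i j" "Max (idx ` {v i, v j}) = max i j" by auto
    then have "c {v i, v j} = colidx n p (min i j) (max i j)" unfolding c_def using sub by simp
    then show ?thesis by (cases "i \<le> j") (auto simp: colidx_sym)
  qed
  have cY: "c {v 1, y} = 1" if "y \<in> P" for y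
  proof -
    have "\<not> {v 1, y} \<subseteq> X" using PX that X_def by auto
    then show ?thesis unfolding c_def by (rule if_not_P)
  qed
  have UP: "\<forall>i\<in>{1..n}. \<forall>j\<in>{1..n}. i \<noteq> j \<longrightarrow> Dg n p (d 1) (colidx n p i j) i \<noteq> Dg n p (d 1) (colidx n p i j) j"
    and UPP: "Dg n p (d 1) 1 1 \<ge> 2" using up_all[OF n4 p_def] by auto
  have degD: "edeg {e\<in>E. c e = k} (v i) = Dg n p (d 1) k i" if "i \<in> {1..n}" for i k
  proof -
    have s1: "{j\<in>{1..n}. j \<noteq> i \<and> c {v i, v j} = k} = {j\<in>{1..n}. j \<noteq> i \<and> colidx n p i j = k}"
      using cX that by auto
    have s2: "{y\<in>P. c {v 1, y} = k} = (if k = 1 then P else {})" using cY by auto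
    have s3: "card {y\<in>P. c {v 1, y} = k} = (if k = 1 then d 1 else 0)" unfolding s2 using cardP by simp
    show ?thesis unfolding degX[OF that] s1 Dg_eq s3 by simp
  qed
  have dec3: "irr_decomp_k E 3"
    unfolding irr_decomp_k_def
  proof (intro exI conjI allI impI ballI)
    fix e assume "e \<in> E"
    then show "c e < 3" unfolding c_def using colidx_le by auto
  next
    fix k :: nat assume "k < 3"
    show "locally_irregular {e\<in>E. c e = k}"
      unfolding locally_irregular_def
    proof (intro allI impI)
      fix u w assume uw: "{u, w} \<in> {e\<in>E. c e = k}" "u \<noteq> w"
      then have inE: "{u, w} \<in> E" and ck: "c {u, w} = k" by auto
      have dis: "(\<exists>i\<in>{1..n}. \<exists>j\<in>{1..n}. i \<noteq> j \<and> {u, w} = {v i, v j}) \<or> (\<exists>y\<in>P. {u, w} = {v 1, y})"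
        using inE by (subst (asm) Ech)
      from dis consider (X) a b where "a \<in> {1..n}" "b \<in> {1..n}" "a \<noteq> b" "{u, w} = {v a, v b}"
        | (Y) y where "y \<in> P" "{u, w} = {v 1, y}" by blast
      then show "edeg {e\<in>E. c e = k} u \<noteq> edeg {e\<in>E. c e = k} w"
      proof cases
        case X
        then have "(u = v a \<and> w = v b) \<or> (u = v b \<and> w = v a)" by (auto simp: doubleton_eq_iff)
        then show ?thesis
        proof
          assume h: "u = v a \<and> w = v b"
          then have kk: "k = colidx n p a b" using ck cX X by simp
          have "Dg n p (d 1) (colidx n p a b) a \<noteq> Dg n p (d 1) (colidx n p a b) b"
            using UP X(1,2,3) by blast
          then show ?thesis using h degD[OF X(1), of k] degD[OF X(2), of k] kk by simp
        next
          assume h: "u = v b \<and> w = v a"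
          then have kk: "k = colidx n p b a" using ck cX X colidx_sym by (simp add: insert_commute)
          have "b \<noteq> a" using X(3) by simp
          then have "Dg n p (d 1) (colidx n p b a) b \<noteq> Dg n p (d 1) (colidx n p b a) a"
            using UP X(1,2) by blast
          then show ?thesis using h degD[OF X(1), of k] degD[OF X(2), of k] kk by simp
        qed
      next
        case Y
        then have k1: "k = 1" using ck cY by simp
        have "(u = v 1 \<and> w = y) \<or> (u = y \<and> w = v 1)" using Y by (auto simp: doubleton_eq_iff)
        moreover have "edeg {e\<in>E. c e = k} y = 1" using degP[OF Y(1), of c k] cY[OF Y(1)] k1 by simp
        moreover have "edeg {e\<in>E. c e = k} (v 1) \<ge> 2" using degD[OF n1, of k] UPP k1 by simp
        ultimately show ?thesis by auto
      qed
    qed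
  qed
  have lb: "3 \<le> k" if hk: "irr_decomp_k E k" for k
  proof (rule ccontr)
    assume "\<not> 3 \<le> k"
    then have "k = 0 \<or> k = 1 \<or> k = 2" by auto
    moreover have "k \<noteq> 0"
    proof
      assume "k = 0"
      then show False using hk E12 unfolding irr_decomp_k_def by auto
    qed
    moreover have "k \<noteq> 1"
    proof
      assume "k = 1"
      then obtain c' :: "'a set \<Rightarrow> nat" where c': "\<forall>e\<in>E. c' e < 1" "locally_irregular {e\<in>E. c' e = 0}"
        using hk unfolding irr_decomp_k_def by auto
      have "{e\<in>E. c' e = 1} = {}" using c'(1) by auto
      then have "locally_irregular {e\<in>E. c' e = 1}" unfolding locally_irregular_def by (simp only: empty_iff) simp
      then have "irr_decomp_k E 2" unfolding irr_decomp_k_def using c'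
        by (intro exI[of _ c']) (auto simp: less_2_cases_iff)
      then show False using no2 by simp
    qed
    ultimately show False using hk no2 by auto
  qed
  have "chi_irr E = 3" unfolding chi_irr_def
  proof (rule Least_equality)
    show "irr_decomp_k E 3" by (rule dec3)
  next
    fix y assume "irr_decomp_k E y"
    then show "3 \<le> y" by (rule lb)
  qed
  then show ?thesis using dec3 unfolding irr_decomposable_def by auto
qed

end
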